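(* Let $P$ be the uniform distribution on $[0,1]$ and $\beta=\{\frac14,\frac12\}$. The conditional optimal set of four-points for $P$ with respect to $\beta$ is $\alpha_4=\{\frac1{12},\frac14,\frac12,\frac56\}$, with $V_4=\frac{5}{768}$ ($\approx0.00651042$).
   Context: For a Borel probability measure $P$ on $\mathbb{R}$ and finite $\beta$ with $\mathrm{card}(\beta)=r$, for $n\ge r$, $V_n=\inf\{\int\min_{a\in\alpha\cup\beta}(x-a)^2dP(x):\mathrm{card}(\alpha)\le n-r\}$; a set $\alpha\cup\beta$ attaining the infimum, with each point of $\beta$ having a Voronoi region of positive $P$-measure, is a conditional optimal set of $n$-points with respect to $\beta$. *)

theory Defs
  imports "HOL-Probability.Probability"
begin

definition distortion :: "real measure \<Rightarrow> real set \<Rightarrow> real" where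
  "distortion P S = (\<integral>x. Min ((\<lambda>a. (x - a)\<^sup>2) ` S) \<partial>P)"

definition cond_error :: "real measure \<Rightarrow> real set \<Rightarrow> nat \<Rightarrow> real" where
  "cond_error P \<beta> n =
     Inf {distortion P (\<alpha> \<union> \<beta>) | \<alpha>. finite \<alpha> \<and> card \<alpha> \<le> n - card \<beta>}"

definition voronoi :: "real set \<Rightarrow> real \<Rightarrow> real set" where
  "voronoi S a = {x. \<forall>b\<in>S. \<bar>x - a\<bar> \<le> \<bar>x - b\<bar>}"

definition cond_optimal :: "real measure \<Rightarrow> real set \<Rightarrow> nat \<Rightarrow> real set \<Rightarrow> bool" where
  "cond_optimal P \<beta> n S \<longleftrightarrow>
     (\<exists>\<alpha>. finite \<alpha> \<and> card \<alpha> \<le> n - card \<beta> \<and> S = \<alpha> \<union> \<beta>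
        \<and> distortion P S = cond_error P \<beta> n
        \<and> (\<forall>b\<in>\<beta>. measure P (voronoi S b) > 0))"

end

theory Submission imports Defs begin

definition FS :: "real set \<Rightarrow> real \<Rightarrow> real" where
  "FS S x = Min ((\<lambda>a. (x - a)\<^sup>2) ` S)"

lemma FS_cont: "finite S \<Longrightarrow> S \<noteq> {} \<Longrightarrow> continuous_on UNIV (FS S)"
proof (induction S rule: finite_ne_induct)
  case (singleton x) then show ?case by (simp add: FS_def continuous_intros)
next
  case (insert x F)
  have "FS (insert x F) = (\<lambda>y. min ((y - x)\<^sup>2) (FS F y))"
    using insert by (auto simp: FS_def fun_eq_iff)
  then show ?case using insert by (auto intro!: continuous_intros)
qed

lemma dist_eq:
  assumes "finite S" "S \<noteq> {}"
  shows "distortion (uniform_measure lborel {0..1}) S = integral {0..1} (FS S)"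
proof -
  have c: "continuous_on UNIV (FS S)" using FS_cont assms by auto
  have m: "FS S \<in> borel_measurable lborel"
    using c by (simp add: borel_measurable_continuous_onI)
  have "uniform_measure lborel {0..1::real} = density lborel (\<lambda>x. ennreal (indicator {0..1} x))"
    unfolding uniform_measure_def by (simp add: ennreal_indicator divide_ennreal_def)
  then have "distortion (uniform_measure lborel {0..1}) S = (\<integral>x. indicator {0..1} x *\<^sub>R FS S x \<partial>lborel)"
    unfolding distortion_def FS_def[symmetric]
    apply simp
    apply (subst integral_density)
    using m by (auto simp: FS_def)
  also have "\<dots> = set_lebesgue_integral lborel {0..1} (FS S)"
    by (simp add: set_lebesgue_integral_def)
  also have "\<dots> = integral {0..1} (FS S)"
    apply (rule set_borel_integral_eq_integral)
    apply (rule borel_integrable_atLeastAtMost')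
    using c continuous_on_subset by blast
  finally show ?thesis .
qed


lemma sq_int:
  fixes c d p :: real
  assumes "c \<le> d"
  shows "((\<lambda>x. (x - p)\<^sup>2) has_integral ((d - p)^3 - (c - p)^3) / 3) {c..d}"
proof -
  have "((\<lambda>x. (x - p)\<^sup>2) has_integral ((\<lambda>x. (x - p)^3 / 3) d - (\<lambda>x. (x - p)^3 / 3) c)) {c..d}"
  proof (rule fundamental_theorem_of_calculus[OF assms])
    fix x assume "x \<in> {c..d}"
    have "((\<lambda>x. (x - p)^3 / 3) has_real_derivative (x - p)\<^sup>2) (at x within {c..d})"
      by (auto intro!: derivative_eq_intros simp: power2_eq_square)
    then show "((\<lambda>x. (x - p)^3 / 3) has_vector_derivative (x - p)\<^sup>2) (at x within {c..d})"
      by (simp add: has_real_derivative_iff_has_vector_derivative)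
  qed
  then show ?thesis by (simp add: diff_divide_distrib)
qed

lemma min2_int:
  fixes p q u v :: real
  assumes "p \<le> q" "u \<le> (p + q) / 2" "(p + q) / 2 \<le> v"
  shows "((\<lambda>x. min ((x - p)\<^sup>2) ((x - q)\<^sup>2)) has_integral
     (((p + q) / 2 - p)^3 - (u - p)^3) / 3 + ((v - q)^3 - ((p + q) / 2 - q)^3) / 3) {u..v}"
proof (rule has_integral_combine[OF assms(2,3)])
  show "((\<lambda>x. min ((x - p)\<^sup>2) ((x - q)\<^sup>2)) has_integral
     (((p + q) / 2 - p)^3 - (u - p)^3) / 3) {u..(p + q) / 2}"
  proof (rule has_integral_eq[OF _ sq_int[OF assms(2)]])
    fix x assume "x \<in> {u..(p + q) / 2}"
    then have "(x - p)\<^sup>2 \<le> (x - q)\<^sup>2"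
    proof -
      have "(x - q)\<^sup>2 - (x - p)\<^sup>2 = (q - p) * ((p + q) - 2 * x)" by (simp add: power2_eq_square algebra_simps)
      moreover have "0 \<le> (q - p) * ((p + q) - 2 * x)" using assms(1) \<open>x \<in> _\<close> by (intro mult_nonneg_nonneg) auto
      ultimately show ?thesis by linarith
    qed
    then show "(x - p)\<^sup>2 = min ((x - p)\<^sup>2) ((x - q)\<^sup>2)" by simp
  qed
  show "((\<lambda>x. min ((x - p)\<^sup>2) ((x - q)\<^sup>2)) has_integral
     ((v - q)^3 - ((p + q) / 2 - q)^3) / 3) {(p + q) / 2..v}"
  proof (rule has_integral_eq[OF _ sq_int[OF assms(3)]])
    fix x assume "x \<in> {(p + q) / 2..v}"
    then have "(x - q)\<^sup>2 \<le> (x - p)\<^sup>2"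
    proof -
      have "(x - p)\<^sup>2 - (x - q)\<^sup>2 = (q - p) * (2 * x - (p + q))" by (simp add: power2_eq_square algebra_simps)
      moreover have "0 \<le> (q - p) * (2 * x - (p + q))" using assms(1) \<open>x \<in> _\<close> by (intro mult_nonneg_nonneg) auto
      ultimately show ?thesis by linarith
    qed
    then show "(x - q)\<^sup>2 = min ((x - p)\<^sup>2) ((x - q)\<^sup>2)" by simp
  qed
qed

lemma FS4: "FS {a, b, c, d} x = min ((x - a)\<^sup>2) (min ((x - b)\<^sup>2) (min ((x - c)\<^sup>2) ((x - d)\<^sup>2)))"
  by (simp add: FS_def)

lemma FS_nonneg: "finite S \<Longrightarrow> S \<noteq> {} \<Longrightarrow> 0 \<le> FS S x"
  unfolding FS_def by (rule Min.boundedI) auto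

lemma split3:
  fixes f :: "real \<Rightarrow> real"
  assumes "continuous_on UNIV f"
  shows "integral {0..1} f = integral {0..1/4} f + integral {1/4..1/2} f + integral {1/2..1::real} f"
proof -
  have i: "f integrable_on {0..1}" by (rule integrable_continuous_interval) (use assms continuous_on_subset in blast)
  have "integral {0..1/2} f + integral {1/2..1} f = integral {0..1} f"
    using Henstock_Kurzweil_Integration.integral_combine[where a=0 and c="1/2" and b=1 and f=f] i by simp
  moreover have "integral {0..1/4} f + integral {1/4..1/2} f = integral {0..1/2} f"
    using Henstock_Kurzweil_Integration.integral_combine[where a=0 and c="1/4" and b="1/2" and f=f] integrable_on_subinterval[OF i, where a=0 and b="1/2"] by simp
  ultimately show ?thesis by simp
qed

lemma cont_int: "continuous_on UNIV f \<Longrightarrow> (f::real\<Rightarrow>real) integrable_on {u..v}"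
  using integrable_continuous_interval continuous_on_subset by blast

lemma lb:
  fixes f g :: "real \<Rightarrow> real"
  assumes "(g has_integral L) {u..v}" "\<And>x. x \<in> {u..v} \<Longrightarrow> g x \<le> f x" "continuous_on UNIV f"
  shows "L \<le> integral {u..v} f"
  using has_integral_le[OF assms(1) integrable_integral[OF cont_int[OF assms(3)]] assms(2)] by blast

lemma ub:
  fixes f g :: "real \<Rightarrow> real"
  assumes "(g has_integral L) {u..v}" "\<And>x. x \<in> {u..v} \<Longrightarrow> f x \<le> g x" "continuous_on UNIV f"
  shows "integral {u..v} f \<le> L"
  using has_integral_le[OF integrable_integral[OF cont_int[OF assms(3)]] assms(1) assms(2)] by blast

lemma int_nonneg:
  fixes f :: "real \<Rightarrow> real"
  assumes "\<And>x. 0 \<le> f x" "continuous_on UNIV f"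
  shows "0 \<le> integral {u..v::real} f"
  by (rule integral_nonneg[OF cont_int[OF assms(2)]]) (use assms in auto)

lemma sq_le: "\<bar>u\<bar> \<le> \<bar>v\<bar> \<Longrightarrow> u\<^sup>2 \<le> (v::real)\<^sup>2"
  by (metis abs_ge_zero power2_abs power_mono)

lemma minle: "\<bar>x - p\<bar> \<le> \<bar>x - s\<bar> \<or> \<bar>x - q\<bar> \<le> \<bar>x - s\<bar> \<Longrightarrow> min ((x - p)\<^sup>2) ((x - q)\<^sup>2) \<le> (x - s :: real)\<^sup>2"
  using sq_le by (meson min.coboundedI1 min.coboundedI2)

lemma FS4_zero: "FS {a, b, c, d} x = 0 \<Longrightarrow> x = a \<or> x = b \<or> x = c \<or> x = d"
  by (simp add: FS4 min_def split: if_splits)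

lemma phi_id: "(((a + 1/4)/2 - a)^3 - (0 - a)^3)/3 + ((1/4 - 1/4)^3 - ((a + 1/4)/2 - 1/4)^3)/3 - 1/1728
   = (a - 1/12)\<^sup>2 * (a/4 + 5/48::real)"
  by (simp add: field_simps power2_eq_square power3_eq_cube)

lemma psi_id: "(((1/2 + b)/2 - 1/2)^3 - (1/2 - 1/2)^3)/3 + ((1 - b)^3 - ((1/2 + b)/2 - b)^3)/3 - 1/216
   = (b - 5/6)\<^sup>2 * ((1 - b)/4 + 5/24::real)"
  by (simp add: field_simps power2_eq_square power3_eq_cube)

lemma core:
  fixes a b :: real
  assumes ab: "a \<le> b"
  defines "D \<equiv> integral {0..1} (FS {a, b, 1/4, 1/2})"
  shows "5/768 \<le> D \<and> (D = 5/768 \<longrightarrow> a = 1/12 \<and> b = 5/6)"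
proof -
  let ?h = "FS {a, b, 1/4, 1/2}"
  have c: "continuous_on UNIV ?h" by (rule FS_cont) auto
  have nn: "\<And>x. 0 \<le> ?h x" by (rule FS_nonneg) auto
  define I1 where "I1 = integral {0..1/4} ?h"
  define I2 where "I2 = integral {1/4..1/2} ?h"
  define I3 where "I3 = integral {1/2..1} ?h"
  have D: "D = I1 + I2 + I3" using split3[OF c] unfolding D_def I1_def I2_def I3_def .
  have I1p: "0 \<le> I1" unfolding I1_def by (rule int_nonneg[OF nn c])
  have I2p: "0 \<le> I2" unfolding I2_def by (rule int_nonneg[OF nn c])
  have I3p: "0 \<le> I3" unfolding I3_def by (rule int_nonneg[OF nn c])
  have sqI: "((\<lambda>x::real. (x - 1/4)\<^sup>2) has_integral 1/192) {0..1/4}"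
    using sq_int[of 0 "1/4" "1/4"] by (simp add: power3_eq_cube)
  have sqIII: "((\<lambda>x::real. (x - 1/2)\<^sup>2) has_integral 1/24) {1/2..1}"
    using sq_int[of "1/2" 1 "1/2"] by (simp add: power3_eq_cube)
  have mII: "((\<lambda>x::real. min ((x - 1/4)\<^sup>2) ((x - 1/2)\<^sup>2)) has_integral 1/768) {1/4..1/2}"
    using min2_int[of "1/4" "1/2" "1/4" "1/2"] by (simp add: power3_eq_cube)
  consider (A) "b \<le> 1/2" | (B) "1/2 < a" | (C) "1/2 < b" "1/4 \<le> a" "a \<le> 1/2"
    | (Dd) "1/2 < b" "a < 1/4" using ab by linarith
  then show ?thesis
  proof cases
    case A
    have "1/24 \<le> I3" unfolding I3_def
    proof (rule lb[OF sqIII _ c])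
      fix x assume "x \<in> {1/2..1::real}"
      then show "(x - 1/2)\<^sup>2 \<le> ?h x" using A ab
        by (simp only: FS4 min.bounded_iff atLeastAtMost_iff) (intro conjI sq_le; arith)
    qed
    then show ?thesis using D I1p I2p by linarith
  next
    case B
    have 1: "1/192 \<le> I1" unfolding I1_def
    proof (rule lb[OF sqI _ c])
      fix x assume "x \<in> {0..1/4::real}"
      then show "(x - 1/4)\<^sup>2 \<le> ?h x" using B ab
        by (simp only: FS4 min.bounded_iff atLeastAtMost_iff) (intro conjI sq_le; arith)
    qed
    have 2: "1/768 \<le> I2" unfolding I2_def
    proof (rule lb[OF mII _ c])
      fix x assume "x \<in> {1/4..1/2::real}"
      then show "min ((x - 1/4)\<^sup>2) ((x - 1/2)\<^sup>2) \<le> ?h x" using B ab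
        by (simp only: FS4 min.bounded_iff atLeastAtMost_iff) (intro conjI minle; arith)
    qed
    have 3: "0 < I3"
    proof (rule ccontr)
      assume "\<not> 0 < I3"
      then have "I3 = 0" using I3p by linarith
      then have hi: "(?h has_integral 0) (cbox (1/2) 1)"
        using integrable_integral[OF cont_int[OF c, of "1/2" 1]] unfolding I3_def by simp
      have z: "?h x = 0" if "x \<in> {1/2..1}" for x
        by (rule has_integral_0_cbox_imp_0[OF _ _ hi]) (use continuous_on_subset[OF c subset_UNIV] nn that in auto)
      have "?h (3/5) = 0" "?h (7/10) = 0" "?h (4/5) = 0" by (auto intro!: z)
      then show False by (auto dest!: FS4_zero)
    qed
    show ?thesis using D 1 2 3 by linarith
  next
    case C
    have 1: "1/192 \<le> I1" unfolding I1_def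
    proof (rule lb[OF sqI _ c])
      fix x assume "x \<in> {0..1/4::real}"
      then show "(x - 1/4)\<^sup>2 \<le> ?h x" using C ab
        by (simp only: FS4 min.bounded_iff atLeastAtMost_iff) (intro conjI sq_le; arith)
    qed
    define b' where "b' = min b 1"
    have b': "1/2 < b'" "b' \<le> 1" "b' \<le> b" "b' = b \<or> (b' = 1 \<and> 1 < b)" using C unfolding b'_def by auto
    have hb: "((\<lambda>x. min ((x - 1/2)\<^sup>2) ((x - b')\<^sup>2)) has_integral
       (((1/2 + b')/2 - 1/2)^3 - (1/2 - 1/2)^3)/3 + ((1 - b')^3 - ((1/2 + b')/2 - b')^3)/3) {1/2..1}"
      by (rule min2_int) (use b' in auto)
    have 3: "(((1/2 + b')/2 - 1/2)^3 - (1/2 - 1/2)^3)/3 + ((1 - b')^3 - ((1/2 + b')/2 - b')^3)/3 \<le> I3"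
      unfolding I3_def
    proof (rule lb[OF hb _ c])
      fix x assume "x \<in> {1/2..1::real}"
      then show "min ((x - 1/2)\<^sup>2) ((x - b')\<^sup>2) \<le> ?h x" using C ab b'
        by (simp only: FS4 min.bounded_iff atLeastAtMost_iff) (intro conjI minle; arith)
    qed
    have "0 \<le> (b' - 5/6)\<^sup>2 * ((1 - b')/4 + 5/24)" using b' by (intro mult_nonneg_nonneg) auto
    then show ?thesis using D 1 3 I2p psi_id[of b'] by linarith
  next
    case Dd
    define b' where "b' = min b 1"
    have b': "1/2 < b'" "b' \<le> 1" "b' \<le> b" "b' = b \<or> (b' = 1 \<and> 1 < b)" using Dd unfolding b'_def by auto
    define a' where "a' = max a 0"
    have a': "a' < 1/4" "0 \<le> a'" "a \<le> a'" "a' = a \<or> (a' = 0 \<and> a < 0)" using Dd unfolding a'_def by auto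
    have ha: "((\<lambda>x. min ((x - a')\<^sup>2) ((x - 1/4)\<^sup>2)) has_integral
       (((a' + 1/4)/2 - a')^3 - (0 - a')^3)/3 + ((1/4 - 1/4)^3 - ((a' + 1/4)/2 - 1/4)^3)/3) {0..1/4}"
      by (rule min2_int) (use a' in auto)
    have 1: "(((a' + 1/4)/2 - a')^3 - (0 - a')^3)/3 + ((1/4 - 1/4)^3 - ((a' + 1/4)/2 - 1/4)^3)/3 \<le> I1"
      unfolding I1_def
    proof (rule lb[OF ha _ c])
      fix x assume "x \<in> {0..1/4::real}"
      then show "min ((x - a')\<^sup>2) ((x - 1/4)\<^sup>2) \<le> ?h x" using Dd ab a'
        by (simp only: FS4 min.bounded_iff atLeastAtMost_iff) (intro conjI minle; arith)
    qed
    have 2: "1/768 \<le> I2" unfolding I2_def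
    proof (rule lb[OF mII _ c])
      fix x assume "x \<in> {1/4..1/2::real}"
      then show "min ((x - 1/4)\<^sup>2) ((x - 1/2)\<^sup>2) \<le> ?h x" using Dd ab
        by (simp only: FS4 min.bounded_iff atLeastAtMost_iff) (intro conjI minle; arith)
    qed
    have hb: "((\<lambda>x. min ((x - 1/2)\<^sup>2) ((x - b')\<^sup>2)) has_integral
       (((1/2 + b')/2 - 1/2)^3 - (1/2 - 1/2)^3)/3 + ((1 - b')^3 - ((1/2 + b')/2 - b')^3)/3) {1/2..1}"
      by (rule min2_int) (use b' in auto)
    have 3: "(((1/2 + b')/2 - 1/2)^3 - (1/2 - 1/2)^3)/3 + ((1 - b')^3 - ((1/2 + b')/2 - b')^3)/3 \<le> I3"
      unfolding I3_def
    proof (rule lb[OF hb _ c])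
      fix x assume "x \<in> {1/2..1::real}"
      then show "min ((x - 1/2)\<^sup>2) ((x - b')\<^sup>2) \<le> ?h x" using Dd ab b'
        by (simp only: FS4 min.bounded_iff atLeastAtMost_iff) (intro conjI minle; arith)
    qed
    have pa: "0 \<le> (a' - 1/12)\<^sup>2 * (a'/4 + 5/48)" using a' by (intro mult_nonneg_nonneg) auto
    have pb: "0 \<le> (b' - 5/6)\<^sup>2 * ((1 - b')/4 + 5/24)" using b' by (intro mult_nonneg_nonneg) auto
    have ge: "5/768 \<le> D" using D 1 2 3 pa pb phi_id[of a'] psi_id[of b'] by linarith
    moreover have "a = 1/12 \<and> b = 5/6" if "D = 5/768"
    proof -
      have "(a' - 1/12)\<^sup>2 * (a'/4 + 5/48) = 0" "(b' - 5/6)\<^sup>2 * ((1 - b')/4 + 5/24) = 0"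
        using that D 1 2 3 pa pb phi_id[of a'] psi_id[of b'] by linarith+
      moreover have "a'/4 + 5/48 > 0" using a' by linarith
      moreover have "(1 - b')/4 + 5/24 > (0::real)" using b'(2) by (simp add: field_simps)
      ultimately have "a' = 1/12" "b' = 5/6" by auto
      then show ?thesis using a' b' by auto
    qed
    ultimately show ?thesis by blast
  qed
qed


lemma core_sym:
  fixes a b :: real
  shows "5/768 \<le> integral {0..1} (FS {a, b, 1/4, 1/2}) \<and>
    (integral {0..1} (FS {a, b, 1/4, 1/2}) = 5/768 \<longrightarrow> {a, b} = {1/12, 5/6})"
proof (cases "a \<le> b")
  case True then show ?thesis using core[OF True] by auto
next
  case False
  then have "b \<le> a" by simp
  moreover have "{a, b, 1/4, 1/2} = {b, a, 1/4, 1/2::real}" by auto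
  ultimately show ?thesis using core[of b a] by auto
qed

lemma card2: "finite A \<Longrightarrow> card A \<le> 2 \<Longrightarrow> \<exists>a b. A \<subseteq> {a, b}"
proof -
  assume "finite A" "card A \<le> 2"
  then consider "card A = 0" | "card A = 1" | "card A = 2" by linarith
  then show ?thesis
  proof cases
    case 1 then show ?thesis using \<open>finite A\<close> by auto
  next
    case 2 then show ?thesis by (auto simp: card_1_singleton_iff)
  next
    case 3 then show ?thesis by (auto simp: card_2_iff)
  qed
qed

lemma FS_anti: "S \<subseteq> T \<Longrightarrow> S \<noteq> {} \<Longrightarrow> finite T \<Longrightarrow> FS T x \<le> FS S x"
  unfolding FS_def by (rule Min_antimono) auto

lemma bound:
  assumes "finite \<alpha>" "\<alpha> \<subseteq> {a, b}"
  shows "integral {0..1} (FS {a, b, 1/4, 1/2}) \<le> distortion (uniform_measure lborel {0..1}) (\<alpha> \<union> {1/4, 1/2})"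
proof -
  have f: "finite (\<alpha> \<union> {1/4, 1/2})" using assms by auto
  have "distortion (uniform_measure lborel {0..1}) (\<alpha> \<union> {1/4, 1/2}) = integral {0..1} (FS (\<alpha> \<union> {1/4, 1/2}))"
    by (rule dist_eq[OF f]) auto
  moreover have "integral {0..1} (FS {a, b, 1/4, 1/2}) \<le> integral {0..1} (FS (\<alpha> \<union> {1/4, 1/2}))"
  proof (rule integral_le)
    show "FS {a, b, 1/4, 1/2} integrable_on {0..1}" by (rule cont_int, rule FS_cont) auto
    show "FS (\<alpha> \<union> {1/4, 1/2}) integrable_on {0..1}" by (rule cont_int, rule FS_cont[OF f]) auto
    show "FS {a, b, 1/4, 1/2} x \<le> FS (\<alpha> \<union> {1/4, 1/2}) x" for x
      by (rule FS_anti) (use assms in auto)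
  qed
  ultimately show ?thesis by simp
qed

lemma key:
  assumes "finite \<alpha>" "\<alpha> \<subseteq> {a, b}"
    "distortion (uniform_measure lborel {0..1}) (\<alpha> \<union> {1/4, 1/2}) \<le> 5/768"
  shows "{a, b} = {1/12, 5/6::real}"
proof -
  have 1: "integral {0..1} (FS {a, b, 1/4, 1/2}) \<le> 5/768" using bound[OF assms(1,2)] assms(3) by linarith
  have 2: "5/768 \<le> integral {0..1} (FS {a, b, 1/4, 1/2})" using core_sym[of a b] by blast
  have "integral {0..1} (FS {a, b, 1/4, 1/2}) = 5/768" using 1 2 by linarith
  then show ?thesis using core_sym[of a b] by blast
qed

lemma lower:
  assumes "finite \<alpha>" "card \<alpha> \<le> 2"
  shows "5/768 \<le> distortion (uniform_measure lborel {0..1}) (\<alpha> \<union> {1/4, 1/2})"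
proof -
  obtain a b where "\<alpha> \<subseteq> {a, b}" using card2 assms by blast
  then have "integral {0..1} (FS {a, b, 1/4, 1/2}) \<le> distortion (uniform_measure lborel {0..1}) (\<alpha> \<union> {1/4, 1/2})"
    using bound[OF assms(1)] by blast
  moreover have "5/768 \<le> integral {0..1} (FS {a, b, 1/4, 1/2})" using core_sym[of a b] by blast
  ultimately show ?thesis by linarith
qed

lemma min4: "min A (min B (min C D)) \<le> min A (B::real)" "min A (min B (min C D)) \<le> min B C"
   "min A (min B (min C D)) \<le> min C D"
  by (auto simp: min_def)

lemma opt_val: "distortion (uniform_measure lborel {0..1}) {1/12, 1/4, 1/2, 5/6} = 5/768"
proof -
  let ?h = "FS {1/12, 1/4, 1/2, 5/6::real}"
  have c: "continuous_on UNIV ?h" by (rule FS_cont) auto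
  have d: "distortion (uniform_measure lborel {0..1}) {1/12, 1/4, 1/2, 5/6} = integral {0..1} ?h"
    by (rule dist_eq) auto
  have h1: "((\<lambda>x::real. min ((x - 1/12)\<^sup>2) ((x - 1/4)\<^sup>2)) has_integral 1/1728) {0..1/4}"
    using min2_int[of "1/12" "1/4" 0 "1/4"] by (simp add: power3_eq_cube)
  have h2: "((\<lambda>x::real. min ((x - 1/4)\<^sup>2) ((x - 1/2)\<^sup>2)) has_integral 1/768) {1/4..1/2}"
    using min2_int[of "1/4" "1/2" "1/4" "1/2"] by (simp add: power3_eq_cube)
  have h3: "((\<lambda>x::real. min ((x - 1/2)\<^sup>2) ((x - 5/6)\<^sup>2)) has_integral 1/216) {1/2..1}"
    using min2_int[of "1/2" "5/6" "1/2" 1] by (simp add: power3_eq_cube)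
  have "integral {0..1/4} ?h \<le> 1/1728"
    by (rule ub[OF h1 _ c]) (simp only: FS4 min4)
  moreover have "integral {1/4..1/2} ?h \<le> 1/768"
    by (rule ub[OF h2 _ c]) (simp only: FS4 min4)
  moreover have "integral {1/2..1} ?h \<le> 1/216"
    by (rule ub[OF h3 _ c]) (simp only: FS4 min4)
  ultimately have "integral {0..1} ?h \<le> 5/768" using split3[OF c] by linarith
  moreover have "5/768 \<le> distortion (uniform_measure lborel {0..1}) {1/12, 1/4, 1/2, 5/6}"
    using lower[of "{1/12, 5/6}"] by (simp add: insert_commute)
  ultimately show ?thesis using d by linarith
qed


lemma vor1: "voronoi {1/12, 1/4, 1/2, 5/6} (1/4) = {1/6..3/8::real}"
  unfolding voronoi_def by (auto simp: abs_real_def split: if_splits)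

lemma vor2: "voronoi {1/12, 1/4, 1/2, 5/6} (1/2) = {3/8..2/3::real}"
  unfolding voronoi_def by (auto simp: abs_real_def split: if_splits)

lemma meas1: "measure (uniform_measure lborel {0..1}) {1/6..3/8::real} > 0"
  by simp

lemma meas2: "measure (uniform_measure lborel {0..1}) {3/8..2/3::real} > 0"
  by simp


theorem proposition3p3:
  defines "P \<equiv> uniform_measure lborel {0..1::real}"
      and "\<beta> \<equiv> {1/4, 1/2::real}"
  shows "(\<forall>S. cond_optimal P \<beta> 4 S \<longleftrightarrow> S = {1/12, 1/4, 1/2, 5/6})
         \<and> cond_error P \<beta> 4 = 5/768"
proof -
  have cb: "card \<beta> = 2" unfolding \<beta>_def by simp
  have Sst: "{1/12, 5/6} \<union> \<beta> = {1/12, 1/4, 1/2, 5/6::real}" unfolding \<beta>_def by auto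
  have ce: "cond_error P \<beta> 4 = 5/768"
    unfolding cond_error_def cb
  proof (rule cInf_eq_minimum)
    show "5/768 \<in> {distortion P (\<alpha> \<union> \<beta>) |\<alpha>. finite \<alpha> \<and> card \<alpha> \<le> 4 - 2}"
      using opt_val Sst unfolding P_def by (auto intro!: exI[of _ "{1/12, 5/6}"])
    show "5/768 \<le> x" if "x \<in> {distortion P (\<alpha> \<union> \<beta>) |\<alpha>. finite \<alpha> \<and> card \<alpha> \<le> 4 - 2}" for x
      using that lower unfolding P_def \<beta>_def by auto
  qed
  have "cond_optimal P \<beta> 4 S \<longleftrightarrow> S = {1/12, 1/4, 1/2, 5/6}" for S
  proof
    assume "cond_optimal P \<beta> 4 S"
    then obtain \<alpha> where al: "finite \<alpha>" "card \<alpha> \<le> 2" "S = \<alpha> \<union> \<beta>" "distortion P S = 5/768"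
      unfolding cond_optimal_def cb ce by auto
    obtain a b where ab: "\<alpha> \<subseteq> {a, b}" using card2 al by blast
    have dl: "distortion (uniform_measure lborel {0..1}) (\<alpha> \<union> {1/4, 1/2}) \<le> 5/768"
      using al unfolding P_def \<beta>_def by simp
    have "{a, b} = {1/12, 5/6::real}" by (rule key[OF al(1) ab dl])
    then have sub: "\<alpha> \<subseteq> {1/12, 5/6}" using ab by simp
    have "1/12 \<in> \<alpha>"
    proof (rule ccontr)
      assume "1/12 \<notin> \<alpha>"
      then have "\<alpha> \<subseteq> {5/6, 5/6}" using sub by auto
      then have "{5/6, 5/6} = {1/12, 5/6::real}" by (rule key[OF al(1) _ dl])
      then show False by (auto simp: doubleton_eq_iff)
    qed
    moreover have "5/6 \<in> \<alpha>"
    proof (rule ccontr)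
      assume "5/6 \<notin> \<alpha>"
      then have "\<alpha> \<subseteq> {1/12, 1/12}" using sub by auto
      then have "{1/12, 1/12} = {1/12, 5/6::real}" by (rule key[OF al(1) _ dl])
      then show False by (auto simp: doubleton_eq_iff)
    qed
    ultimately have "\<alpha> = {1/12, 5/6}" using sub by auto
    then show "S = {1/12, 1/4, 1/2, 5/6}" using al(3) Sst by simp
  next
    assume S: "S = {1/12, 1/4, 1/2, 5/6}"
    show "cond_optimal P \<beta> 4 S"
      unfolding cond_optimal_def cb ce
    proof (intro exI[of _ "{1/12, 5/6}"] conjI)
      show "finite {1/12, 5/6::real}" by simp
      show "card {1/12, 5/6::real} \<le> 4 - 2" by simp
      show "S = {1/12, 5/6} \<union> \<beta>" using S Sst by simp
      show "distortion P S = 5/768" using S opt_val unfolding P_def by simp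
      show "\<forall>b\<in>\<beta>. 0 < measure P (voronoi S b)"
        using S vor1 vor2 meas1 meas2 unfolding \<beta>_def P_def by simp
    qed
  qed
  then show ?thesis using ce by blast
qed

end
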